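(* Let $(X,d)$ be a complete metric space and let $\{f_{\eta_k}:\eta_k\in B^{[k]},\,k\in\mathbb{N}\}$ be a binary tree of continuous maps $f_{\eta_k}:X\to X$. Fix an infinite code $\eta\in B^{[\infty]}$ and consider the sequence of maps $\{f_{\tau_k\eta}\}_{k\in\mathbb{N}}$ along the path $P_\eta$. Assume there is a nonempty compact set $C_{P_\eta}\subseteq X$ with $f_{\tau_k\eta}(C_{P_\eta})\subseteq C_{P_\eta}$ for all $k\in\mathbb{N}$, and that each $f_{\tau_k\eta}$ is Lipschitz with Lipschitz constant $s_{\tau_k\eta}$. If $$\sum_{k=1}^\infty\prod_{i=1}^k s_{\tau_i\eta}<\infty,$$ then for every $x\in C_{P_\eta}$ the limit $$\gamma(\eta):=\lim_{k\to\infty} f_{\tau_1\eta}\circ f_{\tau_2\eta}\circ\cdots\circ f_{\tau_k\eta}(x)$$ exists, and it is the same element of $C_{P_\eta}$ for all $x\in C_{P_\eta}$.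
   Context: $B^{[k]}=\{1,2\}^k$ is the set of binary codes $\eta_k=(i_1i_2\ldots i_k)$ of length $k$, and $B^{[\infty]}=\{1,2\}^{\mathbb{N}}$ the set of infinite codes $\eta=(i_1i_2\ldots)$. For $\eta\in B^{[\infty]}$ (or a finite code of length $>\ell$), the truncation $\tau_\ell\eta=(i_1\ldots i_\ell)\in B^{[\ell]}$. A binary tree of maps assigns to each finite code $\eta_k$ (all $k\ge 1$) a continuous map $f_{\eta_k}:X\to X$. The path $P_\eta$ determined by $\eta$ is the sequence of codes $(\tau_1\eta,\tau_2\eta,\ldots)$. For $f:X\to X$, $\mathrm{Lip}(f)=\sup_{x\neq y}d(f(x),f(y))/d(x,y)$. *)

theory Defs
  imports "HOL-Analysis.Analysis"
begin

(* Binary codes: finite code (i_1 ... i_k) is a list of naturals with entries in {1,2};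
   an infinite code is a function nat => nat, with eta i = i_i for i >= 1 (eta 0 unused). *)
definition binary_codes :: "nat \<Rightarrow> nat list set" where
  "binary_codes k = {xs. length xs = k \<and> set xs \<subseteq> {1,2}}"

definition infinite_codes :: "(nat \<Rightarrow> nat) set" where
  "infinite_codes = {eta. \<forall>i\<ge>1. eta i \<in> {1,2}}"

definition trunc :: "nat \<Rightarrow> (nat \<Rightarrow> nat) \<Rightarrow> nat list" where
  "trunc l eta = map eta [1..<Suc l]"

fun path_comp :: "(nat list \<Rightarrow> 'a \<Rightarrow> 'a) \<Rightarrow> (nat \<Rightarrow> nat) \<Rightarrow> nat \<Rightarrow> 'a \<Rightarrow> 'a" where
  "path_comp f eta 0 = id"
| "path_comp f eta (Suc k) = path_comp f eta k \<circ> f (trunc (Suc k) eta)"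

end

theory Submission
  imports Defs
begin

lemma dist_sum_bound:
  fixes X :: "nat \<Rightarrow> 'a::metric_space"
  shows "m \<le> n \<Longrightarrow> dist (X m) (X n) \<le> (\<Sum>k\<in>{m..<n}. dist (X k) (X (Suc k)))"
proof (induction n)
  case 0 then show ?case by simp
next
  case (Suc n)
  show ?case
  proof (cases "m = Suc n")
    case True then show ?thesis by simp
  next
    case False
    then have "m \<le> n" using Suc.prems by simp
    then have "dist (X m) (X (Suc n)) \<le> dist (X m) (X n) + dist (X n) (X (Suc n))"
      by (simp add: dist_triangle)
    also have "\<dots> \<le> (\<Sum>k\<in>{m..<n}. dist (X k) (X (Suc k))) + dist (X n) (X (Suc n))"
      using Suc.IH[OF \<open>m \<le> n\<close>] by simp
    also have "\<dots> = (\<Sum>k\<in>{m..<Suc n}. dist (X k) (X (Suc k)))"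
      using \<open>m \<le> n\<close> by simp
    finally show ?thesis .
  qed
qed

lemma summable_dist_Cauchy:
  fixes X :: "nat \<Rightarrow> 'a::metric_space"
  assumes "summable (\<lambda>k. dist (X k) (X (Suc k)))"
  shows "Cauchy X"
proof (unfold Cauchy_def, intro allI impI)
  fix e :: real assume "e > 0"
  then obtain N where N: "\<And>m n. m \<ge> N \<Longrightarrow> norm (\<Sum>k\<in>{m..<n}. dist (X k) (X (Suc k))) < e"
    using assms[unfolded summable_Cauchy] by blast
  have "dist (X m) (X n) < e" if "m \<ge> N" "n \<ge> N" for m n
  proof (cases "m \<le> n")
    case True
    have "dist (X m) (X n) \<le> (\<Sum>k\<in>{m..<n}. dist (X k) (X (Suc k)))" using dist_sum_bound True .
    also have "\<dots> < e" using N[OF \<open>m \<ge> N\<close>, of n] by (simp add: sum_nonneg)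
    finally show ?thesis .
  next
    case False
    have "dist (X n) (X m) \<le> (\<Sum>k\<in>{n..<m}. dist (X k) (X (Suc k)))" using dist_sum_bound[of n m X] False by simp
    also have "\<dots> < e" using N[OF \<open>n \<ge> N\<close>, of m] by (simp add: sum_nonneg)
    finally show ?thesis by (simp add: dist_commute)
  qed
  then show "\<exists>M. \<forall>m\<ge>M. \<forall>n\<ge>M. dist (X m) (X n) < e" by blast
qed

theorem mainTheorem1:
  fixes f :: "nat list \<Rightarrow> 'a::complete_space \<Rightarrow> 'a"
    and eta :: "nat \<Rightarrow> nat"
    and C :: "'a set"
    and s :: "nat list \<Rightarrow> real"
  assumes tree_cont: "\<And>k xs. k \<ge> 1 \<Longrightarrow> xs \<in> binary_codes k \<Longrightarrow> continuous_on UNIV (f xs)"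
    and eta_code: "eta \<in> infinite_codes"
    and C_ne: "C \<noteq> {}" and C_compact: "compact C"
    and C_inv: "\<And>k. k \<ge> 1 \<Longrightarrow> f (trunc k eta) ` C \<subseteq> C"
    and lip: "\<And>k. k \<ge> 1 \<Longrightarrow> lipschitz_on (s (trunc k eta)) UNIV (f (trunc k eta))"
    and summ: "summable (\<lambda>k. \<Prod>i=1..Suc k. s (trunc i eta))"
  shows "\<exists>\<gamma>\<in>C. \<forall>x\<in>C. (\<lambda>k. path_comp f eta k x) \<longlonglongrightarrow> \<gamma>"
proof -
  define P where "P = path_comp f eta"
  define L where "L k = (\<Prod>i=1..k. s (trunc i eta))" for k
  define D where "D = diameter C"
  have bC: "bounded C" using C_compact compact_imp_bounded by blast
  have D: "x \<in> C \<Longrightarrow> y \<in> C \<Longrightarrow> dist x y \<le> D" for x y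
    unfolding D_def using diameter_bounded_bound[OF bC] by blast
  have PL: "lipschitz_on (L k) UNIV (P k)" for k
  proof (induction k)
    case 0 then show ?case by (simp add: P_def L_def lipschitz_on_def)
  next
    case (Suc k)
    have "lipschitz_on (L k * s (trunc (Suc k) eta)) UNIV (P k \<circ> f (trunc (Suc k) eta))"
      by (rule lipschitz_on_compose[OF lip]) (auto intro: lipschitz_on_subset[OF Suc.IH])
    moreover have "L (Suc k) = L k * s (trunc (Suc k) eta)"
      unfolding L_def by (simp add: prod.nat_ivl_Suc')
    ultimately show ?case by (simp add: P_def)
  qed
  have PC: "x \<in> C \<Longrightarrow> P k x \<in> C" for k x
  proof (induction k arbitrary: x)
    case 0 then show ?case by (simp add: P_def)
  next
    case (Suc k)
    have "f (trunc (Suc k) eta) x \<in> C" using C_inv[of "Suc k"] Suc.prems by auto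
    then show ?case using Suc.IH by (simp add: P_def)
  qed
  have sL: "summable L" using summ summable_Suc_iff[of L] by (simp add: L_def)
  have L0: "L \<longlonglongrightarrow> 0" using summable_LIMSEQ_zero[OF sL] .
  have conv: "convergent (\<lambda>k. P k x)" if x: "x \<in> C" for x
  proof -
    have step: "dist (P k x) (P (Suc k) x) \<le> L k * D" for k
    proof -
      have g: "f (trunc (Suc k) eta) x \<in> C" using C_inv[of "Suc k"] x by auto
      have "dist (P k x) (P (Suc k) x) = dist (P k x) (P k (f (trunc (Suc k) eta) x))"
        by (simp add: P_def)
      also have "\<dots> \<le> L k * dist x (f (trunc (Suc k) eta) x)"
        using lipschitz_onD[OF PL] by blast
      also have "\<dots> \<le> L k * D"
        using D[OF x g] lipschitz_on_nonneg[OF PL] by (simp add: mult_left_mono)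
      finally show ?thesis .
    qed
    have "summable (\<lambda>k. dist (P k x) (P (Suc k) x))"
      by (rule summable_comparison_test[of _ "\<lambda>k. L k * D"])
         (use step sL summable_mult2 in auto)
    then have "Cauchy (\<lambda>k. P k x)" by (rule summable_dist_Cauchy)
    then show ?thesis using Cauchy_convergent_iff by blast
  qed
  obtain x0 where x0: "x0 \<in> C" using C_ne by blast
  obtain g where g: "(\<lambda>k. P k x0) \<longlonglongrightarrow> g" using conv[OF x0] unfolding convergent_def by blast
  have gC: "g \<in> C"
    by (rule closed_sequentially[OF compact_imp_closed[OF C_compact] _ g]) (use PC x0 in auto)
  have "(\<lambda>k. P k x) \<longlonglongrightarrow> g" if x: "x \<in> C" for x
  proof -
    obtain h where h: "(\<lambda>k. P k x) \<longlonglongrightarrow> h" using conv[OF x] unfolding convergent_def by blast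
    have le: "dist (P k x) (P k x0) \<le> L k * D" for k
      using lipschitz_onD[OF PL, of x x0 k] D[OF x x0] lipschitz_on_nonneg[OF PL]
      by (metis UNIV_I mult_left_mono order_trans)
    have "(\<lambda>k. L k * D) \<longlonglongrightarrow> 0 * D" by (intro tendsto_intros L0)
    have "(\<lambda>k. dist (P k x) (P k x0)) \<longlonglongrightarrow> 0"
    proof (rule tendsto_sandwich[of "\<lambda>_. 0" _ _ "\<lambda>k. L k * D"])
      show "\<forall>\<^sub>F n in sequentially. 0 \<le> dist (P n x) (P n x0)" by simp
      show "\<forall>\<^sub>F n in sequentially. dist (P n x) (P n x0) \<le> L n * D" using le by simp
      show "(\<lambda>n. 0) \<longlonglongrightarrow> 0" by simp
      show "(\<lambda>k. L k * D) \<longlonglongrightarrow> 0" using \<open>(\<lambda>k. L k * D) \<longlonglongrightarrow> 0 * D\<close> by simp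
    qed
    moreover have "(\<lambda>k. dist (P k x) (P k x0)) \<longlonglongrightarrow> dist h g"
      by (intro tendsto_intros h g)
    ultimately have "dist h g = 0" using LIMSEQ_unique by blast
    then show ?thesis using h by simp
  qed
  then show ?thesis using gC unfolding P_def by blast
qed

end
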